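(* Let $0<\alpha<1$, $L\in C^2([a,b]\times\mathbb{R}^n\times\mathbb{R}^n\times\mathbb{R}^n;\mathbb{R})$ and $I[q]=\int_a^b L(t,q,\dot q,{}^C_aD^\alpha_t q)\,dt$. Let $\Psi_2=\{\psi_2(\varepsilon,\cdot)\}_{\varepsilon\in\mathbb{R}}$ be a one-parameter group of diffeomorphisms of $\mathbb{R}^n$ and suppose $I$ is $\varepsilon$-invariant under $\Psi_2$ without transforming time, i.e. for every solution $q$ of the Euler–Lagrange equation $$\partial_2L-\tfrac{d}{dt}\partial_3L+{}_tD^\alpha_b\partial_4L=0$$ (arguments $(t,q(t),\dot q(t),{}^C_aD^\alpha_tq(t))$), for all $\varepsilon$ and every subinterval $[t_a,t_b]\subseteq[a,b]$, $$\int_{t_a}^{t_b}L\big(t,q(t),\dot q(t),{}^C_aD^\alpha_tq(t)\big)dt=\int_{t_a}^{t_b}L\Big(t,\psi_2(\varepsilon,q(t)),\tfrac{d}{dt}\psi_2(\varepsilon,q(t)),{}^C_aD^\alpha_t\psi_2(\varepsilon,q(t))\Big)dt.$$ Then along every such solution $q$, writing $f_2(t)=\frac{\partial\psi_2}{\partial\varepsilon}(0,q(t))$ and evaluating $\partial_iL$ at $(t,q(t),\dot q(t),{}^C_aD^\alpha_tq(t))$, $$f_2\cdot\frac{d}{dt}\partial_3L+\partial_3L\cdot\frac{d}{dt}f_2+\partial_4L\cdot{}^C_aD^\alpha_t f_2-f_2\cdot{}_tD^\alpha_b\partial_4L=0 .$$ *)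

theory Defs
  imports "HOL-Analysis.Analysis"
begin

definition C2_on :: "'a::euclidean_space set \<Rightarrow> ('a \<Rightarrow> real) \<Rightarrow> bool" where
  "C2_on S f \<longleftrightarrow>
     (\<exists>f' f''. (\<forall>x\<in>S. (f has_derivative blinfun_apply (f' x)) (at x within S)) \<and>
               (\<forall>x\<in>S. (f' has_derivative blinfun_apply (f'' x)) (at x within S)) \<and>
               continuous_on S f'')"

fun dirder :: "('a::real_normed_vector \<Rightarrow> 'b::real_normed_vector) \<Rightarrow> 'a list \<Rightarrow> 'a \<Rightarrow> 'b" where
  "dirder f [] = f"
| "dirder f (v # vs) = (\<lambda>x. vector_derivative (\<lambda>h. dirder f vs (x + h *\<^sub>R v)) (at 0))"

definition smooth_map :: "('a::real_normed_vector \<Rightarrow> 'b::real_normed_vector) \<Rightarrow> bool" where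
  "smooth_map f \<longleftrightarrow>
     (\<forall>vs. continuous_on UNIV (dirder f vs) \<and>
       (\<forall>v x. ((\<lambda>h. dirder f vs (x + h *\<^sub>R v)) has_vector_derivative dirder f (v # vs) x) (at 0)))"

definition one_param_group_diffeo :: "(real \<Rightarrow> 'a::euclidean_space \<Rightarrow> 'a) \<Rightarrow> bool" where
  "one_param_group_diffeo \<psi> \<longleftrightarrow>
     smooth_map (\<lambda>(e, x). \<psi> e x) \<and> \<psi> 0 = id \<and> (\<forall>s t. \<psi> (s + t) = \<psi> s \<circ> \<psi> t) \<and>
     (\<forall>e. bij (\<psi> e))"

definition caputo_left :: "real \<Rightarrow> real \<Rightarrow> (real \<Rightarrow> 'a::euclidean_space) \<Rightarrow> real \<Rightarrow> 'a" where
  "caputo_left a \<alpha> f t =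
     integral {a..t} (\<lambda>s. ((t - s) powr (- \<alpha>) / Gamma (1 - \<alpha>)) *\<^sub>R vector_derivative f (at s within {a..t}))"

definition rl_int_right :: "real \<Rightarrow> real \<Rightarrow> (real \<Rightarrow> 'a::euclidean_space) \<Rightarrow> real \<Rightarrow> 'a" where
  "rl_int_right b \<beta> g t = integral {t..b} (\<lambda>s. ((s - t) powr (\<beta> - 1) / Gamma \<beta>) *\<^sub>R g s)"

definition rl_right_deriv :: "real \<Rightarrow> real \<Rightarrow> real \<Rightarrow> (real \<Rightarrow> 'a::euclidean_space) \<Rightarrow> real \<Rightarrow> 'a" where
  "rl_right_deriv a b \<alpha> g t = - vector_derivative (rl_int_right b (1 - \<alpha>) g) (at t within {a..b})"

definition ddt :: "real \<Rightarrow> real \<Rightarrow> (real \<Rightarrow> 'a::real_normed_vector) \<Rightarrow> real \<Rightarrow> 'a" where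
  "ddt a b f t = vector_derivative f (at t within {a..b})"

definition grad2 :: "(real \<Rightarrow> real^'n \<Rightarrow> real^'n \<Rightarrow> real^'n \<Rightarrow> real) \<Rightarrow> real \<Rightarrow> real^'n \<Rightarrow> real^'n \<Rightarrow> real^'n \<Rightarrow> real^'n" where
  "grad2 L t x v w = (\<chi> i. deriv (\<lambda>h. L t (x + h *\<^sub>R axis i 1) v w) 0)"
definition grad3 :: "(real \<Rightarrow> real^'n \<Rightarrow> real^'n \<Rightarrow> real^'n \<Rightarrow> real) \<Rightarrow> real \<Rightarrow> real^'n \<Rightarrow> real^'n \<Rightarrow> real^'n \<Rightarrow> real^'n" where
  "grad3 L t x v w = (\<chi> i. deriv (\<lambda>h. L t x (v + h *\<^sub>R axis i 1) w) 0)"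
definition grad4 :: "(real \<Rightarrow> real^'n \<Rightarrow> real^'n \<Rightarrow> real^'n \<Rightarrow> real) \<Rightarrow> real \<Rightarrow> real^'n \<Rightarrow> real^'n \<Rightarrow> real^'n \<Rightarrow> real^'n" where
  "grad4 L t x v w = (\<chi> i. deriv (\<lambda>h. L t x v (w + h *\<^sub>R axis i 1)) 0)"

definition along :: "((real \<Rightarrow> real^'n \<Rightarrow> real^'n \<Rightarrow> real^'n \<Rightarrow> real) \<Rightarrow> real \<Rightarrow> real^'n \<Rightarrow> real^'n \<Rightarrow> real^'n \<Rightarrow> 'b)
     \<Rightarrow> (real \<Rightarrow> real^'n \<Rightarrow> real^'n \<Rightarrow> real^'n \<Rightarrow> real) \<Rightarrow> real \<Rightarrow> real \<Rightarrow> real \<Rightarrow> (real \<Rightarrow> real^'n) \<Rightarrow> real \<Rightarrow> 'b" where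
  "along G L a b \<alpha> q t = G L t (q t) (ddt a b q t) (caputo_left a \<alpha> q t)"

definition EL_solution :: "real \<Rightarrow> real \<Rightarrow> real \<Rightarrow> (real \<Rightarrow> real^'n \<Rightarrow> real^'n \<Rightarrow> real^'n \<Rightarrow> real) \<Rightarrow> (real \<Rightarrow> real^'n) \<Rightarrow> bool" where
  "EL_solution a b \<alpha> L q \<longleftrightarrow>
     (\<exists>q'. (\<forall>t\<in>{a..b}. (q has_vector_derivative q' t) (at t within {a..b})) \<and> continuous_on {a..b} q') \<and>
     (\<forall>t\<in>{a..b}.
        along grad3 L a b \<alpha> q differentiable (at t within {a..b}) \<and>
        rl_int_right b (1 - \<alpha>) (along grad4 L a b \<alpha> q) differentiable (at t within {a..b}) \<and>
        along grad2 L a b \<alpha> q t - ddt a b (along grad3 L a b \<alpha> q) t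
          + rl_right_deriv a b \<alpha> (along grad4 L a b \<alpha> q) t = 0)"

end

theory Submission
  imports Defs
begin

definition TT :: "real \<Rightarrow> real \<Rightarrow> (real \<Rightarrow> 'a::euclidean_space) \<Rightarrow> real \<Rightarrow> 'a" where
  "TT a \<alpha> G t = integral {a..t} (\<lambda>s. ((t - s) powr (- \<alpha>) / Gamma (1 - \<alpha>)) *\<^sub>R G s)"

lemma kern_has_int:
  fixes \<alpha> c :: real
  assumes "0 < \<alpha>" "\<alpha> < 1" "0 \<le> c"
  shows "((\<lambda>u. u powr (- \<alpha>) / Gamma (1 - \<alpha>)) has_integral
          (c powr (1 - \<alpha>) / (1 - \<alpha>) / Gamma (1 - \<alpha>))) {0..c}"
proof -
  have "((\<lambda>u. u powr (- \<alpha>)) has_integral (c powr (- \<alpha> + 1) / (- \<alpha> + 1))) {0..c}"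
    using has_integral_powr_from_0[of "-\<alpha>" c] assms by simp
  then have "((\<lambda>u. u powr (- \<alpha>)) has_integral (c powr (1 - \<alpha>) / (1 - \<alpha>))) {0..c}"
    by (simp add: add.commute)
  from has_integral_divide[OF this, of "Gamma (1 - \<alpha>)"] show ?thesis .
qed

lemma kern_abs_int:
  fixes \<alpha> c :: real
  assumes "0 < \<alpha>" "\<alpha> < 1" "0 \<le> c"
  shows "(\<lambda>u. u powr (- \<alpha>) / Gamma (1 - \<alpha>)) absolutely_integrable_on {0..c}"
proof (rule nonnegative_absolutely_integrable_1)
  show "(\<lambda>u. u powr (- \<alpha>) / Gamma (1 - \<alpha>)) integrable_on {0..c}"
    using kern_has_int[OF assms] by blast
  show "0 \<le> x powr (- \<alpha>) / Gamma (1 - \<alpha>)" for x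
    using assms by (simp add: less_imp_le)
qed

lemma bilinear_scaleR_flip: "bilinear (\<lambda>(v::'a::real_vector) (r::real). r *\<^sub>R v)"
  unfolding bilinear_def
  by (auto intro!: linearI simp: scaleR_add_left scaleR_add_right)

lemma kern_prod_abs_int:
  fixes H :: "real \<Rightarrow> 'a::euclidean_space" and \<alpha> c :: real
  assumes "0 < \<alpha>" "\<alpha> < 1" "0 \<le> c" "continuous_on {0..c} H"
  shows "(\<lambda>u. (u powr (- \<alpha>) / Gamma (1 - \<alpha>)) *\<^sub>R H u) absolutely_integrable_on {0..c}"
proof -
  have "(\<lambda>u. (\<lambda>v r. r *\<^sub>R v) (H u) (u powr (- \<alpha>) / Gamma (1 - \<alpha>))) absolutely_integrable_on {0..c}"
  proof (rule absolutely_integrable_bounded_measurable_product[OF bilinear_scaleR_flip])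
    show "H \<in> borel_measurable (lebesgue_on {0..c})"
      by (rule continuous_imp_measurable_on_sets_lebesgue) (use assms in auto)
    show "bounded (H ` {0..c})"
      using assms(4) by (simp add: compact_continuous_image compact_imp_bounded)
    show "(\<lambda>u. u powr (- \<alpha>) / Gamma (1 - \<alpha>)) absolutely_integrable_on {0..c}"
      by (rule kern_abs_int[OF assms(1-3)])
  qed auto
  then show ?thesis by simp
qed

lemma refl_shift_has_integral:
  fixes \<phi> :: "real \<Rightarrow> 'a::euclidean_space" and a t :: real
  assumes "a \<le> t" "(\<phi> has_integral I) {0..t-a}"
  shows "((\<lambda>s. \<phi> (t - s)) has_integral I) {a..t}"
proof -
  have "((\<lambda>x. \<phi> ((-1) *\<^sub>R x + t)) has_integral (1 / (\<bar>-1\<bar> ^ DIM(real))) *\<^sub>R I)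
     ((\<lambda>x. (1 / (-1)) *\<^sub>R x + -((1 / (-1)) *\<^sub>R t)) ` cbox 0 (t-a))"
    by (rule has_integral_affinity) (use assms in auto)
  moreover have "(\<lambda>x. (1 / (-1)) *\<^sub>R x + -((1 / (-1)) *\<^sub>R t)) ` cbox 0 (t-a) = {a..t}"
    using assms by (auto simp: image_iff)
  ultimately show ?thesis by simp
qed

lemma TT_subst:
  fixes G :: "real \<Rightarrow> 'a::euclidean_space" and a t \<alpha> :: real
  assumes "0 < \<alpha>" "\<alpha> < 1" "a \<le> t" "continuous_on {a..t} G"
  shows "((\<lambda>s. ((t - s) powr (- \<alpha>) / Gamma (1 - \<alpha>)) *\<^sub>R G s) has_integral
            integral {0..t-a} (\<lambda>u. (u powr (- \<alpha>) / Gamma (1 - \<alpha>)) *\<^sub>R G (t - u))) {a..t}"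
proof -
  have "continuous_on {0..t-a} (\<lambda>u. G (t - u))"
    by (rule continuous_on_compose2[OF assms(4)]) (auto intro!: continuous_intros)
  then have "(\<lambda>u. (u powr (- \<alpha>) / Gamma (1 - \<alpha>)) *\<^sub>R G (t - u)) integrable_on {0..t-a}"
    using kern_prod_abs_int[of \<alpha> "t-a" "\<lambda>u. G (t - u)"] assms
    by (simp add: absolutely_integrable_on_def)
  from refl_shift_has_integral[OF assms(3) integrable_integral[OF this]]
  show ?thesis by simp
qed

lemma TT_integrable:
  fixes G :: "real \<Rightarrow> 'a::euclidean_space" and a t \<alpha> :: real
  assumes "0 < \<alpha>" "\<alpha> < 1" "a \<le> t" "continuous_on {a..t} G"
  shows "(\<lambda>s. ((t - s) powr (- \<alpha>) / Gamma (1 - \<alpha>)) *\<^sub>R G s) integrable_on {a..t}"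
  using TT_subst[OF assms] by blast

lemma TT_eq_subst:
  fixes G :: "real \<Rightarrow> 'a::euclidean_space" and a t \<alpha> :: real
  assumes "0 < \<alpha>" "\<alpha> < 1" "a \<le> t" "continuous_on {a..t} G"
  shows "TT a \<alpha> G t = integral {0..t-a} (\<lambda>u. (u powr (- \<alpha>) / Gamma (1 - \<alpha>)) *\<^sub>R G (t - u))"
  unfolding TT_def using TT_subst[OF assms] by (rule integral_unique)

lemma TT_bound:
  fixes G :: "real \<Rightarrow> 'a::euclidean_space" and a t \<alpha> M :: real
  assumes "0 < \<alpha>" "\<alpha> < 1" "a \<le> t" "continuous_on {a..t} G"
    and M: "\<And>s. s \<in> {a..t} \<Longrightarrow> norm (G s) \<le> M"
  shows "norm (TT a \<alpha> G t) \<le> M * ((t - a) powr (1 - \<alpha>) / (1 - \<alpha>) / Gamma (1 - \<alpha>))"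
proof -
  have g: "((\<lambda>s. M * ((t - s) powr (- \<alpha>) / Gamma (1 - \<alpha>))) has_integral
        M * ((t - a) powr (1 - \<alpha>) / (1 - \<alpha>) / Gamma (1 - \<alpha>))) {a..t}"
    using refl_shift_has_integral[OF assms(3) has_integral_mult_right[OF kern_has_int[of \<alpha> "t-a"]]] assms
    by simp
  have "norm (TT a \<alpha> G t) \<le> integral {a..t} (\<lambda>s. M * ((t - s) powr (- \<alpha>) / Gamma (1 - \<alpha>)))"
    unfolding TT_def
  proof (rule integral_norm_bound_integral)
    show "(\<lambda>s. ((t - s) powr (- \<alpha>) / Gamma (1 - \<alpha>)) *\<^sub>R G s) integrable_on {a..t}"
      by (rule TT_integrable[OF assms(1-4)])
    show "(\<lambda>s. M * ((t - s) powr (- \<alpha>) / Gamma (1 - \<alpha>))) integrable_on {a..t}"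
      using g by blast
    fix s assume s: "s \<in> {a..t}"
    have "norm (((t - s) powr (- \<alpha>) / Gamma (1 - \<alpha>)) *\<^sub>R G s)
        = ((t - s) powr (- \<alpha>) / Gamma (1 - \<alpha>)) * norm (G s)"
      using assms by simp
    also have "\<dots> \<le> ((t - s) powr (- \<alpha>) / Gamma (1 - \<alpha>)) * M"
      by (rule mult_left_mono[OF M[OF s]]) (use assms in simp)
    finally show "norm (((t - s) powr (- \<alpha>) / Gamma (1 - \<alpha>)) *\<^sub>R G s)
        \<le> M * ((t - s) powr (- \<alpha>) / Gamma (1 - \<alpha>))" by (simp add: mult.commute)
  qed
  also have "\<dots> = M * ((t - a) powr (1 - \<alpha>) / (1 - \<alpha>) / Gamma (1 - \<alpha>))"
    using g by (rule integral_unique)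
  finally show ?thesis .
qed

lemma TT_diff:
  fixes G1 G2 :: "real \<Rightarrow> 'a::euclidean_space" and a t \<alpha> :: real
  assumes "0 < \<alpha>" "\<alpha> < 1" "a \<le> t" "continuous_on {a..t} G1" "continuous_on {a..t} G2"
  shows "TT a \<alpha> (\<lambda>s. G1 s - G2 s) t = TT a \<alpha> G1 t - TT a \<alpha> G2 t"
  unfolding TT_def scaleR_diff_right
  by (rule integral_diff[OF TT_integrable[OF assms(1-4)] TT_integrable[OF assms(1-3,5)]])

lemma TT_scale:
  fixes G :: "real \<Rightarrow> 'a::euclidean_space" and a t \<alpha> c :: real
  shows "TT a \<alpha> (\<lambda>s. c *\<^sub>R G s) t = c *\<^sub>R TT a \<alpha> G t"
  unfolding TT_def by (simp only: scaleR_left_commute[of _ c] integral_cmul)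


lemma TT_continuous:
  fixes G :: "real \<Rightarrow> 'a::euclidean_space" and a b \<alpha> :: real
  assumes al: "0 < \<alpha>" "\<alpha> < 1" and ab: "a \<le> b" and cG: "continuous_on {a..b} G"
  shows "continuous_on {a..b} (TT a \<alpha> G)"
proof -
  define cl where "cl = (\<lambda>s::real. max a (min b s))"
  define H where "H = (\<lambda>s. G (cl s))"
  have clab: "cl s \<in> {a..b}" for s using ab by (auto simp: cl_def)
  have cH: "continuous_on UNIV H"
    unfolding H_def
    by (rule continuous_on_compose2[OF cG]) (use ab in \<open>auto simp: cl_def clab intro!: continuous_intros\<close>)
  have HG: "s \<in> {a..b} \<Longrightarrow> H s = G s" for s by (auto simp: H_def cl_def)
  obtain M where "\<forall>x\<in>G ` {a..b}. norm x \<le> M"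
    using compact_imp_bounded[OF compact_continuous_image[OF cG compact_Icc]]
    by (auto simp: bounded_iff)
  then have M: "\<And>s. s \<in> {a..b} \<Longrightarrow> norm (G s) \<le> M" by auto
  have M0: "0 \<le> M" using M[of a] ab by (meson atLeastAtMost_iff norm_ge_zero order.trans order_refl)
  have MH: "norm (H s) \<le> M" for s unfolding H_def using M clab by blast
  define k where "k = (\<lambda>u::real. u powr (- \<alpha>) / Gamma (1 - \<alpha>))"
  have k0: "0 \<le> k u" for u using al by (simp add: k_def)
  define f where "f = (\<lambda>t u. if u \<in> {..t-a} then k u *\<^sub>R H (t - u) else 0)"
  define F where "F = (\<lambda>t. integral {0..b-a} (f t))"
  have fint: "f t integrable_on {0..b-a}" and TTF: "TT a \<alpha> G t = F t" if t: "t \<in> {a..b}" for t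
  proof -
    have cHt: "continuous_on {a..t} H"
      using cH continuous_on_subset by blast
    have cHt': "continuous_on {0..t-a} (\<lambda>u. H (t - u))"
      by (rule continuous_on_compose2[OF cH]) (auto intro!: continuous_intros)
    have int1: "(\<lambda>u. k u *\<^sub>R H (t - u)) integrable_on {0..t-a}"
      using kern_prod_abs_int[OF al _ cHt'] t unfolding k_def
      by (simp add: absolutely_integrable_on_def)
    have eqset: "{..t-a} \<inter> {0..b-a} = {0..t-a}" using t by auto
    show "f t integrable_on {0..b-a}"
      unfolding f_def integrable_restrict_Int eqset by (rule int1)
    have "TT a \<alpha> G t = TT a \<alpha> H t"
      unfolding TT_def using t HG by (intro integral_cong) auto
    also have "\<dots> = integral {0..t-a} (\<lambda>u. k u *\<^sub>R H (t - u))"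
      using TT_eq_subst[OF al _ cHt] t by (simp add: k_def)
    also have "\<dots> = F t"
      unfolding F_def f_def integral_restrict_Int eqset ..
    finally show "TT a \<alpha> G t = F t" .
  qed
  have kint: "(\<lambda>u. M * k u) integrable_on {0..b-a}"
    using has_integral_mult_right[OF kern_has_int[OF al, of "b-a"], of M] ab unfolding k_def
    by auto
  have "continuous_on {a..b} F"
  proof (rule continuous_on_sequentiallyI)
    fix u :: "nat \<Rightarrow> real" and t
    assume u: "\<forall>n. u n \<in> {a..b}" and t: "t \<in> {a..b}" and lim: "u \<longlonglongrightarrow> t"
    define S' where "S' = {0..b-a} - {t-a}"
    have negl: "negligible {x \<in> {0..b-a} - S'. g x \<noteq> 0}" "negligible {x \<in> S' - {0..b-a}. g x \<noteq> 0}"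
      for g :: "real \<Rightarrow> 'a"
      by (rule negligible_subset[of "{t-a}"]; auto simp: S'_def)+
    have eqI: "integral {0..b-a} g = integral S' g" for g :: "real \<Rightarrow> 'a"
      by (rule integral_spike_set[OF negl])
    have dc: "(\<lambda>n. integral S' (f (u n))) \<longlonglongrightarrow> integral S' (f t)"
    proof (rule dominated_convergence(2))
      show "f (u n) integrable_on S'" for n
        by (rule integrable_spike_set[OF fint[OF u[rule_format]] negl])
      show "(\<lambda>x. M * k x) integrable_on S'"
        by (rule integrable_spike_set[OF kint]) (rule negligible_subset[of "{t-a}"]; auto simp: S'_def)+
      show "norm (f (u n) x) \<le> M * k x" if "x \<in> S'" for n x
        using MH[of "u n - x"] k0[of x] M0
        by (auto simp: f_def mult.commute[of M] intro: mult_left_mono)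
      show "(\<lambda>n. f (u n) x) \<longlonglongrightarrow> f t x" if x: "x \<in> S'" for x
      proof (cases "x < t - a")
        case True
        then have ev: "eventually (\<lambda>n. x < u n - a) sequentially"
          using order_tendstoD(1)[OF tendsto_diff[OF lim tendsto_const[of a]] True] by simp
        have "(\<lambda>n. k x *\<^sub>R H (u n - x)) \<longlonglongrightarrow> k x *\<^sub>R H (t - x)"
          by (intro tendsto_intros isCont_tendsto_compose[where g=H] lim)
            (use cH in \<open>simp add: continuous_on_eq_continuous_at\<close>)
        moreover have "eventually (\<lambda>n. k x *\<^sub>R H (u n - x) = f (u n) x) sequentially"
          using ev by eventually_elim (auto simp: f_def)
        moreover have "f t x = k x *\<^sub>R H (t - x)" using True by (simp add: f_def)
        ultimately show ?thesis using Lim_transform_eventually by metis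
      next
        case False
        then have "x > t - a" using x by (auto simp: S'_def)
        then have ev: "eventually (\<lambda>n. u n - a < x) sequentially"
          using order_tendstoD(2)[OF tendsto_diff[OF lim tendsto_const[of a]] \<open>x > t - a\<close>] by simp
        have "eventually (\<lambda>n. 0 = f (u n) x) sequentially"
          using ev by eventually_elim (auto simp: f_def)
        moreover have "f t x = 0" using \<open>x > t - a\<close> by (simp add: f_def)
        ultimately show ?thesis using Lim_transform_eventually[OF tendsto_const] by metis
      qed
    qed
    then show "(\<lambda>n. F (u n)) \<longlonglongrightarrow> F t"
      unfolding F_def eqI .
  qed
  then show ?thesis
    by (rule continuous_on_cong[THEN iffD1, rotated 2]) (auto simp: TTF)
qed


lemma TT_deriv:
  fixes Gf :: "real \<Rightarrow> real \<Rightarrow> 'a::euclidean_space" and a t \<alpha> :: real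
  assumes al: "0 < \<alpha>" "\<alpha> < 1" and at: "a \<le> t"
    and cG: "\<And>\<epsilon>. continuous_on {a..t} (Gf \<epsilon>)" and cH: "continuous_on {a..t} H"
    and unif: "\<And>e. e > 0 \<Longrightarrow> \<exists>d>0. \<forall>\<epsilon>. \<bar>\<epsilon>\<bar> < d \<longrightarrow>
                 (\<forall>s\<in>{a..t}. norm (Gf \<epsilon> s - Gf 0 s - \<epsilon> *\<^sub>R H s) \<le> e * \<bar>\<epsilon>\<bar>)"
  shows "((\<lambda>\<epsilon>. TT a \<alpha> (Gf \<epsilon>) t) has_vector_derivative TT a \<alpha> H t) (at 0)"
  unfolding has_vector_derivative_def has_derivative_at_alt
proof (intro conjI allI impI)
  show "bounded_linear (\<lambda>h. h *\<^sub>R TT a \<alpha> H t)" by (rule bounded_linear_scaleR_left)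
  fix e :: real assume e: "e > 0"
  define C where "C = (t - a) powr (1 - \<alpha>) / (1 - \<alpha>) / Gamma (1 - \<alpha>)"
  have C0: "0 \<le> C" using al by (simp add: C_def)
  obtain d where d: "d > 0" and dd: "\<And>\<epsilon> s. \<bar>\<epsilon>\<bar> < d \<Longrightarrow> s \<in> {a..t} \<Longrightarrow>
      norm (Gf \<epsilon> s - Gf 0 s - \<epsilon> *\<^sub>R H s) \<le> e / (C + 1) * \<bar>\<epsilon>\<bar>"
    using unif[of "e / (C + 1)"] e C0 by force
  show "\<exists>d>0. \<forall>y. norm (y - 0) < d \<longrightarrow>
      norm (TT a \<alpha> (Gf y) t - TT a \<alpha> (Gf 0) t - (y - 0) *\<^sub>R TT a \<alpha> H t) \<le> e * norm (y - 0)"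
  proof (intro exI[of _ d] conjI allI impI d)
    fix y :: real assume y: "norm (y - 0) < d"
    have cH': "continuous_on {a..t} (\<lambda>s. y *\<^sub>R H s)" by (intro continuous_intros cH)
    have cD: "continuous_on {a..t} (\<lambda>s. Gf y s - Gf 0 s)" by (intro continuous_intros cG)
    have "TT a \<alpha> (Gf y) t - TT a \<alpha> (Gf 0) t - y *\<^sub>R TT a \<alpha> H t
        = TT a \<alpha> (\<lambda>s. Gf y s - Gf 0 s - y *\<^sub>R H s) t"
      by (simp add: TT_diff[OF al at cD cH'] TT_diff[OF al at cG cG] TT_scale)
    also have "norm \<dots> \<le> (e / (C + 1) * \<bar>y\<bar>) * ((t - a) powr (1 - \<alpha>) / (1 - \<alpha>) / Gamma (1 - \<alpha>))"
      by (rule TT_bound[OF al at]) (use y dd in \<open>auto intro!: continuous_intros cG cH\<close>)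
    also have "\<dots> = (e / (C + 1) * \<bar>y\<bar>) * C" by (simp only: C_def)
    also have "\<dots> \<le> e * \<bar>y\<bar>"
    proof -
      have "(e / (C + 1) * \<bar>y\<bar>) * C = e * \<bar>y\<bar> * (C / (C + 1))" using C0 by (simp add: field_simps)
      also have "\<dots> \<le> e * \<bar>y\<bar> * 1"
        by (rule mult_left_mono) (use C0 e in auto)
      finally show ?thesis by simp
    qed
    finally show "norm (TT a \<alpha> (Gf y) t - TT a \<alpha> (Gf 0) t - (y - 0) *\<^sub>R TT a \<alpha> H t) \<le> e * norm (y - 0)"
      by simp
  qed
qed


lemma shift_vd:
  fixes F :: "real \<Rightarrow> 'b::real_normed_vector"
  assumes "((\<lambda>h. F (c + h)) has_vector_derivative D) (at 0)"
  shows "(F has_vector_derivative D) (at c)"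
proof -
  have 1: "((\<lambda>z. z - c) has_vector_derivative 1) (at c)"
    by (auto intro!: derivative_eq_intros)
  have "(((\<lambda>h. F (c + h)) \<circ> (\<lambda>z. z - c)) has_vector_derivative (1 *\<^sub>R D)) (at c)"
    by (rule vector_diff_chain_at[OF 1]) (use assms in simp)
  then show ?thesis by (simp add: o_def)
qed

definition Pj :: "'n set \<Rightarrow> real^'n \<Rightarrow> real^'n" where
  "Pj J h = (\<chi> i. if i \<in> J then h$i else 0)"

lemma Pj_insert: "j \<notin> J \<Longrightarrow> Pj (insert j J) h = Pj J h + h$j *\<^sub>R axis j 1"
  by (auto simp: Pj_def vec_eq_iff axis_def)

lemma Pj_empty: "Pj {} h = 0"
  by (simp add: Pj_def vec_eq_iff)

lemma Pj_UNIV: "Pj UNIV h = h"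
  by (auto simp: Pj_def vec_eq_iff)

lemma frechet_from_partials:
  fixes f :: "real^'n \<Rightarrow> 'b::real_normed_vector" and g :: "'n \<Rightarrow> real^'n \<Rightarrow> 'b"
  assumes der: "\<And>i x. ((\<lambda>h. f (x + h *\<^sub>R axis i 1)) has_vector_derivative g i x) (at 0)"
    and cont: "\<And>i. continuous_on UNIV (g i)"
  shows "(f has_derivative (\<lambda>h. \<Sum>i\<in>UNIV. h$i *\<^sub>R g i x)) (at x)"
proof -
  have claim: "\<forall>e>0. \<exists>d>0. \<forall>h. norm h < d \<longrightarrow>
      norm (f (x + Pj J h) - f x - (\<Sum>i\<in>J. h$i *\<^sub>R g i x)) \<le> e * norm h"
    if fJ: "finite J" for J :: "'n set"
    using fJ
  proof (induction J rule: finite_induct)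
    case empty
    show ?case by (auto simp: Pj_empty intro!: exI[of _ 1])
  next
    case (insert j J)
    show ?case
    proof (intro allI impI)
      fix e :: real assume e: "e > 0"
      obtain d1 where d1: "d1 > 0" and dd1: "\<And>h. norm h < d1 \<Longrightarrow>
          norm (f (x + Pj J h) - f x - (\<Sum>i\<in>J. h$i *\<^sub>R g i x)) \<le> e / 2 * norm h"
        using insert(3) e by (meson half_gt_zero)
      have "continuous (at x) (g j)" using cont[of j] by (simp add: continuous_on_eq_continuous_at)
      then obtain d2 where d2: "d2 > 0" and dd2: "\<And>y. dist y x < d2 \<Longrightarrow> dist (g j y) (g j x) < e / 8"
        unfolding continuous_at_eps_delta using e by (metis zero_less_divide_iff zero_less_numeral)
      show "\<exists>d>0. \<forall>h. norm h < d \<longrightarrow>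
          norm (f (x + Pj (insert j J) h) - f x - (\<Sum>i\<in>insert j J. h$i *\<^sub>R g i x)) \<le> e * norm h"
      proof (intro exI[of _ "min d1 d2"] conjI allI impI)
        show "0 < min d1 d2" using d1 d2 by simp
        fix h :: "real^'n" assume h: "norm h < min d1 d2"
        define y where "y = x + Pj J h"
        define \<phi> where "\<phi> = (\<lambda>\<tau>. f (y + \<tau> *\<^sub>R axis j 1))"
        have close: "dist (y + \<tau> *\<^sub>R axis j 1) x < d2" if "\<bar>\<tau>\<bar> \<le> \<bar>h$j\<bar>" for \<tau>
        proof -
          have "norm (Pj J h + \<tau> *\<^sub>R axis j 1) \<le> norm h"
            by (rule norm_le_componentwise_cart) (use that insert(2) in \<open>auto simp: Pj_def axis_def\<close>)
          then show ?thesis using h by (simp add: y_def dist_norm algebra_simps)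
        qed
        have phid: "(\<phi> has_vector_derivative g j (y + \<tau> *\<^sub>R axis j 1)) (at \<tau> within S)" for \<tau> S
        proof -
          have "((\<lambda>h. f ((y + \<tau> *\<^sub>R axis j 1) + h *\<^sub>R axis j 1)) has_vector_derivative
                  g j (y + \<tau> *\<^sub>R axis j 1)) (at 0)" by (rule der)
          then have "((\<lambda>h. \<phi> (\<tau> + h)) has_vector_derivative g j (y + \<tau> *\<^sub>R axis j 1)) (at 0)"
            by (simp add: \<phi>_def scaleR_add_left add.assoc)
          then show ?thesis by (rule has_vector_derivative_at_within[OF shift_vd])
        qed
        have lin: "norm (\<phi> (h$j) - \<phi> 0 - (h$j - 0) *\<^sub>R g j (y + 0 *\<^sub>R axis j 1)) \<le> norm (h$j - 0) * (e / 4)"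
        proof (rule vector_differentiable_bound_linearization[of "closed_segment 0 (h$j)" \<phi> "\<lambda>\<tau>. g j (y + \<tau> *\<^sub>R axis j 1)" 0 "h$j" 0 "e / 4"])
          show "(\<phi> has_vector_derivative g j (y + \<tau> *\<^sub>R axis j 1)) (at \<tau> within closed_segment 0 (h$j))"
            if "\<tau> \<in> closed_segment 0 (h$j)" for \<tau>
            by (rule phid)
          fix \<tau> assume \<tau>: "\<tau> \<in> closed_segment 0 (h$j)"
          then have "\<bar>\<tau>\<bar> \<le> \<bar>h$j\<bar>" by (auto simp: closed_segment_eq_real_ivl split: if_splits)
          then have "dist (g j (y + \<tau> *\<^sub>R axis j 1)) (g j x) < e / 8" by (intro dd2 close)
          moreover have "dist (g j (y + 0 *\<^sub>R axis j 1)) (g j x) < e / 8" by (intro dd2 close) simp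
          ultimately show "norm (g j (y + \<tau> *\<^sub>R axis j 1) - g j (y + 0 *\<^sub>R axis j 1)) \<le> e / 4"
            using dist_triangle2[of "g j (y + \<tau> *\<^sub>R axis j 1)" "g j (y + 0 *\<^sub>R axis j 1)" "g j x"]
            by (simp add: dist_norm)
        qed auto
        have gy: "norm (h$j *\<^sub>R (g j y - g j x)) \<le> \<bar>h$j\<bar> * (e / 8)"
        proof -
          have "norm (g j y - g j x) \<le> e / 8" using dd2[OF close[of 0]] by (simp add: dist_norm)
          then have "\<bar>h$j\<bar> * norm (g j y - g j x) \<le> \<bar>h$j\<bar> * (e / 8)"
            by (rule mult_left_mono) simp
          then show ?thesis by simp
        qed
        have hj: "\<bar>h$j\<bar> \<le> norm h" by (rule component_le_norm_cart)
        have IH: "norm (f y - f x - (\<Sum>i\<in>J. h$i *\<^sub>R g i x)) \<le> e / 2 * norm h"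
          unfolding y_def using h by (intro dd1) simp
        have xP: "x + Pj (insert j J) h = y + h$j *\<^sub>R axis j 1"
          using insert(2) by (simp add: Pj_insert y_def add.assoc)
        have eq: "f (x + Pj (insert j J) h) - f x - (\<Sum>i\<in>insert j J. h$i *\<^sub>R g i x)
           = (\<phi> (h$j) - \<phi> 0 - h$j *\<^sub>R g j y) + h$j *\<^sub>R (g j y - g j x)
             + (f y - f x - (\<Sum>i\<in>J. h$i *\<^sub>R g i x))"
          unfolding xP using insert(1,2) by (simp add: \<phi>_def scaleR_diff_right)
        have lin': "norm (\<phi> (h$j) - \<phi> 0 - h$j *\<^sub>R g j y) \<le> \<bar>h$j\<bar> * (e / 4)"
          using lin by simp
        have "norm (f (x + Pj (insert j J) h) - f x - (\<Sum>i\<in>insert j J. h$i *\<^sub>R g i x))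
            \<le> \<bar>h$j\<bar> * (e / 4) + \<bar>h$j\<bar> * (e / 8) + e / 2 * norm h"
          unfolding eq using lin' gy IH norm_triangle_le norm_triangle_ineq add_mono
          by (smt (verit))
        also have "\<dots> \<le> norm h * (e / 4) + norm h * (e / 8) + e / 2 * norm h"
          using hj e by (intro add_mono mult_right_mono) auto
        also have "\<dots> \<le> e * norm h" using e by (simp add: field_simps)
        finally show "norm (f (x + Pj (insert j J) h) - f x - (\<Sum>i\<in>insert j J. h$i *\<^sub>R g i x)) \<le> e * norm h" .
      qed
    qed
  qed
  have lin: "bounded_linear (\<lambda>h. \<Sum>i\<in>UNIV. h$i *\<^sub>R g i x)"
    unfolding linear_conv_bounded_linear[symmetric]
    by (rule linearI) (simp_all add: scaleR_add_left sum.distrib scaleR_sum_right)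
  have cl: "\<forall>e>0. \<exists>d>0. \<forall>h. norm h < d \<longrightarrow>
      norm (f (x + h) - f x - (\<Sum>i\<in>UNIV. h$i *\<^sub>R g i x)) \<le> e * norm h"
    using claim[of UNIV] by (simp add: Pj_UNIV)
  show ?thesis
    unfolding has_derivative_at_alt
  proof (intro conjI lin allI impI)
    fix e :: real assume "e > 0"
    then obtain d where "d > 0" and d: "\<And>h. norm h < d \<Longrightarrow>
      norm (f (x + h) - f x - (\<Sum>i\<in>UNIV. h$i *\<^sub>R g i x)) \<le> e * norm h" using cl by blast
    show "\<exists>d>0. \<forall>y. norm (y - x) < d \<longrightarrow>
       norm (f y - f x - (\<Sum>i\<in>UNIV. (y - x)$i *\<^sub>R g i x)) \<le> e * norm (y - x)"
      using d[of "y - x" for y] \<open>d > 0\<close> by (metis add.commute diff_add_cancel)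
  qed
qed


lemma lin3:
  fixes F :: "real \<Rightarrow> 'b::real_normed_vector"
  assumes der: "\<And>\<tau>. (F has_vector_derivative F' \<tau>) (at \<tau>)" and h: "0 \<le> h"
    and B: "\<And>\<tau>. \<tau> \<in> {0..h} \<Longrightarrow> norm (F' \<tau> - c) \<le> B"
  shows "norm (F h - F 0 - h *\<^sub>R c) \<le> 3 * h * B"
proof -
  have B0: "0 \<le> B" using B[of 0] h by (meson atLeastAtMost_iff norm_ge_zero order.trans order_refl)
  have "norm (F h - F 0 - (h - 0) *\<^sub>R F' 0) \<le> norm (h - 0) * (2 * B)"
  proof (rule vector_differentiable_bound_linearization[of "{0..h}" F F' 0 h 0 "2 * B"])
    show "(F has_vector_derivative F' \<tau>) (at \<tau> within {0..h})" if "\<tau> \<in> {0..h}" for \<tau>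
      using der has_vector_derivative_at_within by blast
    show "closed_segment 0 h \<subseteq> {0..h}" using h by (simp add: closed_segment_eq_real_ivl)
    show "0 \<in> {0..h}" using h by simp
    fix \<tau> assume "\<tau> \<in> {0..h}"
    then have "norm (F' \<tau> - c) \<le> B" "norm (F' 0 - c) \<le> B" using B h by auto
    then show "norm (F' \<tau> - F' 0) \<le> 2 * B"
      using norm_triangle_ineq4[of "F' \<tau> - c" "F' 0 - c"] by simp
  qed
  moreover have "norm (h *\<^sub>R (F' 0 - c)) \<le> h * B"
    using B[of 0] h by (simp add: mult_left_mono)
  ultimately have "norm ((F h - F 0 - h *\<^sub>R F' 0) + h *\<^sub>R (F' 0 - c)) \<le> h * (2 * B) + h * B"
    using h by (smt (verit) norm_triangle_ineq real_norm_def diff_zero)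
  then show ?thesis by (simp add: scaleR_diff_right algebra_simps)
qed

lemma schwarz_half:
  fixes \<phi> :: "real \<Rightarrow> real \<Rightarrow> 'b::real_normed_vector"
  assumes P: "\<And>u v. ((\<lambda>k. \<phi> (u + k) v) has_vector_derivative P u v) (at 0)"
    and PQ: "\<And>u v. ((\<lambda>k. P u (v + k)) has_vector_derivative PQ u v) (at 0)"
    and h: "0 \<le> h"
    and near: "\<And>u v. u \<in> {0..h} \<Longrightarrow> v \<in> {0..h} \<Longrightarrow> norm (PQ u v - PQ 0 0) \<le> e"
  shows "norm (\<phi> h h - \<phi> h 0 - \<phi> 0 h + \<phi> 0 0 - (h * h) *\<^sub>R PQ 0 0) \<le> 9 * (h * h) * e"
proof -
  have inner: "norm (P \<sigma> h - P \<sigma> 0 - h *\<^sub>R PQ 0 0) \<le> 3 * h * e" if \<sigma>: "\<sigma> \<in> {0..h}" for \<sigma>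
  proof (rule lin3[of "P \<sigma>" "PQ \<sigma>" h "PQ 0 0" e])
    show "(P \<sigma> has_vector_derivative PQ \<sigma> \<tau>) (at \<tau>)" for \<tau>
      by (rule shift_vd) (rule PQ)
    show "0 \<le> h" by (rule h)
    show "norm (PQ \<sigma> \<tau> - PQ 0 0) \<le> e" if "\<tau> \<in> {0..h}" for \<tau>
      by (rule near[OF \<sigma> that])
  qed
  define g where "g = (\<lambda>\<sigma>. \<phi> \<sigma> h - \<phi> \<sigma> 0)"
  have "norm (g h - g 0 - h *\<^sub>R (h *\<^sub>R PQ 0 0)) \<le> 3 * h * (3 * h * e)"
  proof (rule lin3[of g "\<lambda>\<sigma>. P \<sigma> h - P \<sigma> 0" h "h *\<^sub>R PQ 0 0" "3 * h * e"])
    show "(g has_vector_derivative P \<tau> h - P \<tau> 0) (at \<tau>)" for \<tau>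
      unfolding g_def by (rule has_vector_derivative_diff[OF shift_vd[OF P] shift_vd[OF P]])
    show "0 \<le> h" by (rule h)
    show "norm (P \<tau> h - P \<tau> 0 - h *\<^sub>R PQ 0 0) \<le> 3 * h * e" if "\<tau> \<in> {0..h}" for \<tau>
      by (rule inner[OF that])
  qed
  moreover have "g h - g 0 - h *\<^sub>R (h *\<^sub>R PQ 0 0) = \<phi> h h - \<phi> h 0 - \<phi> 0 h + \<phi> 0 0 - (h * h) *\<^sub>R PQ 0 0"
    unfolding g_def by (simp add: diff_diff_eq2 diff_add_eq)
  moreover have "3 * h * (3 * h * e) = 9 * (h * h) * e" by simp
  ultimately show ?thesis by simp
qed

lemma schwarz:
  fixes \<phi> :: "real \<Rightarrow> real \<Rightarrow> 'b::real_normed_vector"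
  assumes P: "\<And>u v. ((\<lambda>k. \<phi> (u + k) v) has_vector_derivative P u v) (at 0)"
    and Q: "\<And>u v. ((\<lambda>k. \<phi> u (v + k)) has_vector_derivative Q u v) (at 0)"
    and PQ: "\<And>u v. ((\<lambda>k. P u (v + k)) has_vector_derivative PQ u v) (at 0)"
    and QP: "\<And>u v. ((\<lambda>k. Q (u + k) v) has_vector_derivative QP u v) (at 0)"
    and cPQ: "continuous (at (0,0)) (\<lambda>(u,v). PQ u v)"
    and cQP: "continuous (at (0,0)) (\<lambda>(u,v). QP u v)"
  shows "PQ 0 0 = QP 0 0"
proof -
  have H18: "norm (PQ 0 0 - QP 0 0) \<le> 18 * e" if e: "e > 0" for e
  proof -
    obtain d1 where d1: "d1 > 0" "\<And>z. dist z (0,0) < d1 \<Longrightarrow> dist ((\<lambda>(u,v). PQ u v) z) (PQ 0 0) < e"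
      using cPQ e unfolding continuous_at_eps_delta by fastforce
    obtain d2 where d2: "d2 > 0" "\<And>z. dist z (0,0) < d2 \<Longrightarrow> dist ((\<lambda>(u,v). QP u v) z) (QP 0 0) < e"
      using cQP e unfolding continuous_at_eps_delta by fastforce
    define h where "h = min d1 d2 / 4"
    have h: "h > 0" using d1 d2 by (simp add: h_def)
    have small: "dist (u, v) (0,0) < d1" "dist (u, v) (0,0) < d2" if "u \<in> {0..h}" "v \<in> {0..h}" for u v :: real
    proof -
      have "dist (u, v) (0,0) \<le> norm u + norm v"
        using norm_Pair_le[of u v] by (simp add: dist_norm)
      also have "\<dots> < min d1 d2" using that h by (auto simp: h_def)
      finally show "dist (u, v) (0,0) < d1" "dist (u, v) (0,0) < d2" by auto
    qed
    have A: "norm (\<phi> h h - \<phi> h 0 - \<phi> 0 h + \<phi> 0 0 - (h * h) *\<^sub>R PQ 0 0) \<le> 9 * (h * h) * e"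
      by (rule schwarz_half[OF P PQ]) (use h d1 small in \<open>auto simp: dist_norm intro: less_imp_le\<close>)
    have B: "norm ((\<lambda>u v. \<phi> v u) h h - (\<lambda>u v. \<phi> v u) h 0 - (\<lambda>u v. \<phi> v u) 0 h + (\<lambda>u v. \<phi> v u) 0 0
               - (h * h) *\<^sub>R (\<lambda>u v. QP v u) 0 0) \<le> 9 * (h * h) * e"
      by (rule schwarz_half[where P="\<lambda>u v. Q v u"]) (use Q QP h d2 small in \<open>auto simp: dist_norm intro: less_imp_le\<close>)
    define X where "X = \<phi> h h - \<phi> h 0 - \<phi> 0 h + \<phi> 0 0"
    have B': "norm (X - (h * h) *\<^sub>R QP 0 0) \<le> 9 * (h * h) * e"
      using B by (simp add: X_def algebra_simps)
    have A': "norm (X - (h * h) *\<^sub>R PQ 0 0) \<le> 9 * (h * h) * e"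
      using A by (simp add: X_def)
    have eqd: "(h * h) *\<^sub>R (PQ 0 0 - QP 0 0) = (X - (h * h) *\<^sub>R QP 0 0) - (X - (h * h) *\<^sub>R PQ 0 0)"
      by (simp add: algebra_simps)
    have "norm ((h * h) *\<^sub>R (PQ 0 0 - QP 0 0)) \<le> 9 * (h * h) * e + 9 * (h * h) * e"
      unfolding eqd using norm_triangle_ineq4[of "X - (h * h) *\<^sub>R QP 0 0" "X - (h * h) *\<^sub>R PQ 0 0"] A' B'
      by linarith
    then have "(h * h) * norm (PQ 0 0 - QP 0 0) \<le> (h * h) * (18 * e)" using h by simp
    then show ?thesis using h by (simp add: mult_le_cancel_left_pos)
  qed
  have "norm (PQ 0 0 - QP 0 0) \<le> 0"
  proof (rule ccontr)
    assume n: "\<not> norm (PQ 0 0 - QP 0 0) \<le> 0"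
    from H18[of "norm (PQ 0 0 - QP 0 0) / 36"] n show False by simp
  qed
  then show ?thesis by simp
qed


lemma sm_der: "smooth_map F \<Longrightarrow> ((\<lambda>k. dirder F vs (p + k *\<^sub>R v)) has_vector_derivative dirder F (v # vs) p) (at 0)"
  unfolding smooth_map_def by blast

lemma sm_cont: "smooth_map F \<Longrightarrow> continuous_on UNIV (dirder F vs)"
  unfolding smooth_map_def by blast

definition "Ef \<psi> e y = dirder (\<lambda>(e, x). \<psi> e x) [(1, 0)] (e, y)"
definition "Dxf \<psi> i e y = dirder (\<lambda>(e, x). \<psi> e x) [(0, axis i 1)] (e, y)"
definition "Af \<psi> i e y = dirder (\<lambda>(e, x). \<psi> e x) [(0, axis i 1), (1, 0)] (e, y)"
definition "Bf \<psi> i e y = dirder (\<lambda>(e, x). \<psi> e x) [(1, 0), (0, axis i 1)] (e, y)"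

context
  fixes \<psi> :: "real \<Rightarrow> real^'n \<Rightarrow> real^'n"
  assumes sm: "smooth_map (\<lambda>(e, x). \<psi> e x)"
begin

lemma L1: "((\<lambda>k. \<psi> (e + k) y) has_vector_derivative Ef \<psi> e y) (at 0)"
  using sm_der[OF sm, of "[]" "(e, y)" "(1, 0)"] by (simp add: Ef_def)

lemma L2: "((\<lambda>k. \<psi> e (y + k *\<^sub>R axis i 1)) has_vector_derivative Dxf \<psi> i e y) (at 0)"
  using sm_der[OF sm, of "[]" "(e, y)" "(0, axis i 1)"] by (simp add: Dxf_def)

lemma L3: "((\<lambda>k. Ef \<psi> e (y + k *\<^sub>R axis i 1)) has_vector_derivative Af \<psi> i e y) (at 0)"
  using sm_der[OF sm, of "[(1, 0)]" "(e, y)" "(0, axis i 1)"] by (simp add: Ef_def Af_def)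

lemma L4: "((\<lambda>k. Dxf \<psi> i (e + k) y) has_vector_derivative Bf \<psi> i e y) (at 0)"
  using sm_der[OF sm, of "[(0, axis i 1)]" "(e, y)" "(1, 0)"] by (simp add: Dxf_def Bf_def)

lemma cont_pair: "continuous_on UNIV (\<lambda>(e, y). dirder (\<lambda>(e, x). \<psi> e x) vs (e, y))"
  using sm_cont[OF sm, of vs] by (simp add: case_prod_beta')

lemma C_Dx: "continuous_on UNIV (\<lambda>(e, y). Dxf \<psi> i e y)"
  unfolding Dxf_def by (rule cont_pair)
lemma C_E: "continuous_on UNIV (\<lambda>(e, y). Ef \<psi> e y)"
  unfolding Ef_def by (rule cont_pair)
lemma C_A: "continuous_on UNIV (\<lambda>(e, y). Af \<psi> i e y)"
  unfolding Af_def by (rule cont_pair)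
lemma C_B: "continuous_on UNIV (\<lambda>(e, y). Bf \<psi> i e y)"
  unfolding Bf_def by (rule cont_pair)

lemma cont_slice:
  assumes "continuous_on UNIV (\<lambda>(e, y). F e y)"
  shows "continuous_on UNIV (F e)"
proof -
  have "continuous_on UNIV ((\<lambda>(e, y). F e y) \<circ> (\<lambda>y. (e, y)))"
    by (rule continuous_on_compose) (auto intro!: continuous_intros continuous_on_subset[OF assms])
  then show ?thesis by (simp add: o_def)
qed

lemma frechet_psi: "(\<psi> e has_derivative (\<lambda>h. \<Sum>i\<in>UNIV. h$i *\<^sub>R Dxf \<psi> i e y)) (at y)"
  by (rule frechet_from_partials[OF L2 cont_slice[OF C_Dx]])

lemma frechet_E: "(Ef \<psi> e has_derivative (\<lambda>h. \<Sum>i\<in>UNIV. h$i *\<^sub>R Af \<psi> i e y)) (at y)"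
  by (rule frechet_from_partials[OF L3 cont_slice[OF C_A]])

lemma AB: "Af \<psi> i e y = Bf \<psi> i e y"
proof -
  have "(\<lambda>u v. Af \<psi> i (e + u) (y + v *\<^sub>R axis i 1)) 0 0 = (\<lambda>u v. Bf \<psi> i (e + u) (y + v *\<^sub>R axis i 1)) 0 0"
  proof (rule schwarz[where \<phi>="\<lambda>u v. \<psi> (e + u) (y + v *\<^sub>R axis i 1)"
        and P="\<lambda>u v. Ef \<psi> (e + u) (y + v *\<^sub>R axis i 1)"
        and Q="\<lambda>u v. Dxf \<psi> i (e + u) (y + v *\<^sub>R axis i 1)"
        and PQ="\<lambda>u v. Af \<psi> i (e + u) (y + v *\<^sub>R axis i 1)"
        and QP="\<lambda>u v. Bf \<psi> i (e + u) (y + v *\<^sub>R axis i 1)"])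
    show "((\<lambda>k. \<psi> (e + (u + k)) (y + v *\<^sub>R axis i 1)) has_vector_derivative Ef \<psi> (e + u) (y + v *\<^sub>R axis i 1)) (at 0)" for u v
      using L1[of "e + u" "y + v *\<^sub>R axis i 1"] by (simp add: add.assoc)
    show "((\<lambda>k. \<psi> (e + u) (y + (v + k) *\<^sub>R axis i 1)) has_vector_derivative Dxf \<psi> i (e + u) (y + v *\<^sub>R axis i 1)) (at 0)" for u v
      using L2[of "e + u" "y + v *\<^sub>R axis i 1" i] by (simp add: add.assoc scaleR_add_left)
    show "((\<lambda>k. Ef \<psi> (e + u) (y + (v + k) *\<^sub>R axis i 1)) has_vector_derivative Af \<psi> i (e + u) (y + v *\<^sub>R axis i 1)) (at 0)" for u v
      using L3[of "e + u" "y + v *\<^sub>R axis i 1" i] by (simp add: add.assoc scaleR_add_left)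
    show "((\<lambda>k. Dxf \<psi> i (e + (u + k)) (y + v *\<^sub>R axis i 1)) has_vector_derivative Bf \<psi> i (e + u) (y + v *\<^sub>R axis i 1)) (at 0)" for u v
      using L4[of i "e + u" "y + v *\<^sub>R axis i 1"] by (simp add: add.assoc)
    have m: "continuous_on UNIV (\<lambda>(u, v). (e + u, y + v *\<^sub>R axis i 1))"
      by (auto simp: case_prod_beta' intro!: continuous_intros)
    have "continuous_on UNIV ((\<lambda>(e, y). Af \<psi> i e y) \<circ> (\<lambda>(u, v). (e + u, y + v *\<^sub>R axis i 1)))"
      by (rule continuous_on_compose[OF m continuous_on_subset[OF C_A]]) auto
    then show "continuous (at (0, 0)) (\<lambda>(u, v). Af \<psi> i (e + u) (y + v *\<^sub>R axis i 1))"
      by (simp add: o_def case_prod_beta' continuous_on_eq_continuous_at)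
    have "continuous_on UNIV ((\<lambda>(e, y). Bf \<psi> i e y) \<circ> (\<lambda>(u, v). (e + u, y + v *\<^sub>R axis i 1)))"
      by (rule continuous_on_compose[OF m continuous_on_subset[OF C_B]]) auto
    then show "continuous (at (0, 0)) (\<lambda>(u, v). Bf \<psi> i (e + u) (y + v *\<^sub>R axis i 1))"
      by (simp add: o_def case_prod_beta' continuous_on_eq_continuous_at)
  qed
  then show ?thesis by simp
qed

end


definition "Gf \<psi> q q' \<epsilon> s = (\<Sum>i\<in>UNIV. (q' s)$i *\<^sub>R Dxf \<psi> i \<epsilon> (q s))"
definition "Hf \<psi> q q' s = (\<Sum>i\<in>UNIV. (q' s)$i *\<^sub>R Af \<psi> i 0 (q s))"

context
  fixes \<psi> :: "real \<Rightarrow> real^'n \<Rightarrow> real^'n" and q q' :: "real \<Rightarrow> real^'n" and a b :: real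
  assumes sm: "smooth_map (\<lambda>(e, x). \<psi> e x)" and ab: "a < b"
    and qd: "\<And>s. s \<in> {a..b} \<Longrightarrow> (q has_vector_derivative q' s) (at s within {a..b})"
    and cq': "continuous_on {a..b} q'"
begin

lemma cq: "continuous_on {a..b} q"
  unfolding continuous_on_eq_continuous_within
  using qd has_vector_derivative_continuous by blast

lemma chain_gen:
  fixes F :: "real^'n \<Rightarrow> real^'n" and D :: "'n \<Rightarrow> real^'n \<Rightarrow> real^'n"
  assumes fr: "\<And>y. (F has_derivative (\<lambda>h. \<Sum>i\<in>UNIV. h$i *\<^sub>R D i y)) (at y)" and s: "s \<in> {a..b}"
  shows "((\<lambda>s. F (q s)) has_vector_derivative (\<Sum>i\<in>UNIV. (q' s)$i *\<^sub>R D i (q s))) (at s within {a..b})"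
proof -
  have "((\<lambda>s. F (q s)) has_derivative (\<lambda>h. \<Sum>i\<in>UNIV. (h *\<^sub>R q' s)$i *\<^sub>R D i (q s))) (at s within {a..b})"
    by (rule has_derivative_in_compose[OF qd[OF s, unfolded has_vector_derivative_def]])
       (rule has_derivative_at_withinI[OF fr])
  moreover have "(\<lambda>h. \<Sum>i\<in>UNIV. (h *\<^sub>R q' s)$i *\<^sub>R D i (q s)) = (\<lambda>h. h *\<^sub>R (\<Sum>i\<in>UNIV. (q' s)$i *\<^sub>R D i (q s)))"
    by (simp add: scaleR_sum_right)
  ultimately show ?thesis unfolding has_vector_derivative_def by simp
qed

lemma chain_psi: "s \<in> {a..b} \<Longrightarrow> ((\<lambda>s. \<psi> \<epsilon> (q s)) has_vector_derivative Gf \<psi> q q' \<epsilon> s) (at s within {a..b})"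
  unfolding Gf_def by (rule chain_gen[OF frechet_psi[OF sm]])

lemma chain_E: "s \<in> {a..b} \<Longrightarrow> ((\<lambda>s. Ef \<psi> 0 (q s)) has_vector_derivative Hf \<psi> q q' s) (at s within {a..b})"
  unfolding Hf_def by (rule chain_gen[OF frechet_E[OF sm]])

lemma cont_comp_q:
  assumes "continuous_on UNIV (\<lambda>(e, y). F e y)"
  shows "continuous_on {a..b} (\<lambda>s. F e (q s))"
  by (rule continuous_on_compose2[OF cont_slice[OF sm assms] cq]) auto

lemma cont_G: "continuous_on {a..b} (Gf \<psi> q q' \<epsilon>)"
  unfolding Gf_def
  by (intro continuous_intros cq' cont_comp_q[OF C_Dx[OF sm]])

lemma cont_H: "continuous_on {a..b} (Hf \<psi> q q')"
  unfolding Hf_def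
  by (intro continuous_intros cq' cont_comp_q[OF C_A[OF sm]])

lemma Dx_der: "((\<lambda>\<tau>. Dxf \<psi> i \<tau> y) has_vector_derivative Bf \<psi> i \<tau> y) (at \<tau>)"
  by (rule shift_vd) (rule L4[OF sm])

lemma G_der: "((\<lambda>\<tau>. Gf \<psi> q q' \<tau> s) has_vector_derivative (\<Sum>i\<in>UNIV. (q' s)$i *\<^sub>R Bf \<psi> i \<tau> (q s))) (at \<tau>)"
  unfolding Gf_def
  by (intro has_vector_derivative_sum bounded_linear.has_vector_derivative[OF bounded_linear_scaleR_right] Dx_der)

lemma H_alt: "Hf \<psi> q q' s = (\<Sum>i\<in>UNIV. (q' s)$i *\<^sub>R Bf \<psi> i 0 (q s))"
  unfolding Hf_def by (simp add: AB[OF sm])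

lemma derG: "((\<lambda>\<epsilon>. Gf \<psi> q q' \<epsilon> s) has_vector_derivative Hf \<psi> q q' s) (at 0)"
  unfolding H_alt by (rule G_der)

lemma unif_G:
  assumes e: "e > 0"
  shows "\<exists>d>0. \<forall>\<epsilon>. \<bar>\<epsilon>\<bar> < d \<longrightarrow>
           (\<forall>s\<in>{a..b}. norm (Gf \<psi> q q' \<epsilon> s - Gf \<psi> q q' 0 s - \<epsilon> *\<^sub>R Hf \<psi> q q' s) \<le> e * \<bar>\<epsilon>\<bar>)"
proof -
  define W where "W = (\<lambda>p. \<Sum>i\<in>UNIV. (q' (snd p))$i *\<^sub>R Bf \<psi> i (fst p) (q (snd p)))"
  define S where "S = {-1..1::real} \<times> {a..b}"
  have cS: "compact S" unfolding S_def by (intro compact_Times compact_Icc)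
  have cqs: "continuous_on S (\<lambda>p. q (snd p))"
    by (rule continuous_on_compose2[OF cq]) (auto simp: S_def intro!: continuous_intros)
  have cq's: "continuous_on S (\<lambda>p. q' (snd p))"
    by (rule continuous_on_compose2[OF cq']) (auto simp: S_def intro!: continuous_intros)
  have cB: "continuous_on S (\<lambda>p. Bf \<psi> i (fst p) (q (snd p)))" for i
  proof -
    have "continuous_on S ((\<lambda>(e, y). Bf \<psi> i e y) \<circ> (\<lambda>p. (fst p, q (snd p))))"
      by (rule continuous_on_compose[OF _ continuous_on_subset[OF C_B[OF sm]]])
         (auto intro!: continuous_intros cqs)
    then show ?thesis by (simp add: o_def)
  qed
  have cW: "continuous_on S W"
    unfolding W_def by (intro continuous_intros cq's cB)
  have "uniformly_continuous_on S W" by (rule compact_uniformly_continuous[OF cW cS])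
  then obtain d where d: "d > 0" and dd: "\<And>x x'. x \<in> S \<Longrightarrow> x' \<in> S \<Longrightarrow> dist x' x < d \<Longrightarrow> dist (W x') (W x) < e"
    unfolding uniformly_continuous_on_def using e by metis
  show ?thesis
  proof (intro exI[of _ "min d 1"] conjI allI impI ballI)
    show "0 < min d 1" using d by simp
    fix \<epsilon> s assume \<epsilon>: "\<bar>\<epsilon>\<bar> < min d 1" and s: "s \<in> {a..b}"
    have "norm (Gf \<psi> q q' \<epsilon> s - Gf \<psi> q q' 0 s - (\<epsilon> - 0) *\<^sub>R W (0, s)) \<le> norm (\<epsilon> - 0) * e"
    proof (rule vector_differentiable_bound_linearization[of "closed_segment 0 \<epsilon>" "\<lambda>\<tau>. Gf \<psi> q q' \<tau> s" "\<lambda>\<tau>. W (\<tau>, s)" 0 \<epsilon> 0 e])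
      show "((\<lambda>\<tau>. Gf \<psi> q q' \<tau> s) has_vector_derivative W (x, s)) (at x within closed_segment 0 \<epsilon>)"
        if "x \<in> closed_segment 0 \<epsilon>" for x
        unfolding W_def using G_der has_vector_derivative_at_within by fastforce
      fix x assume x: "x \<in> closed_segment 0 \<epsilon>"
      then have "\<bar>x\<bar> \<le> \<bar>\<epsilon>\<bar>" by (auto simp: closed_segment_eq_real_ivl split: if_splits)
      then have "dist (W (x, s)) (W (0, s)) < e"
        using \<epsilon> s by (intro dd) (auto simp: S_def dist_Pair_Pair)
      then show "norm (W (x, s) - W (0, s)) \<le> e" by (simp add: dist_norm)
    qed auto
    moreover have "W (0, s) = Hf \<psi> q q' s" by (simp add: W_def H_alt)
    ultimately show "norm (Gf \<psi> q q' \<epsilon> s - Gf \<psi> q q' 0 s - \<epsilon> *\<^sub>R Hf \<psi> q q' s) \<le> e * \<bar>\<epsilon>\<bar>"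
      by (simp add: mult.commute)
  qed
qed

end


lemma dir_deriv_L:
  fixes Lf :: "real \<times> (real^'n) \<times> (real^'n) \<times> (real^'n) \<Rightarrow> real"
  assumes der: "(Lf has_derivative blinfun_apply L') (at p within ({a..b} \<times> UNIV))"
    and p: "fst p \<in> {a..b}" and V: "fst V = 0"
  shows "deriv (\<lambda>h. Lf (p + h *\<^sub>R V)) 0 = blinfun_apply L' V"
proof -
  have f: "((\<lambda>h. p + h *\<^sub>R V) has_derivative (\<lambda>h. h *\<^sub>R V)) (at 0 within UNIV)"
    by (auto intro!: derivative_eq_intros)
  have sub: "(\<lambda>h. p + h *\<^sub>R V) ` UNIV \<subseteq> {a..b} \<times> UNIV"
    using p V by (simp add: image_subset_iff mem_Times_iff)
  have "((\<lambda>h. Lf (p + h *\<^sub>R V)) has_derivative (\<lambda>h. blinfun_apply L' (h *\<^sub>R V))) (at 0)"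
    by (rule has_derivative_in_compose[OF f]) (use has_derivative_subset[OF _ sub] der in simp)
  moreover have "(\<lambda>h. blinfun_apply L' (h *\<^sub>R V)) = (*) (blinfun_apply L' V)"
    by (auto simp: blinfun.scaleR_right)
  ultimately have "((\<lambda>h. Lf (p + h *\<^sub>R V)) has_field_derivative blinfun_apply L' V) (at 0)"
    unfolding has_field_derivative_def by simp
  then show ?thesis by (rule DERIV_imp_deriv)
qed

lemma linear_cart_expand:
  fixes M :: "real^'n \<Rightarrow> real"
  assumes "linear M"
  shows "M y = (\<Sum>i\<in>UNIV. y$i * M (axis i 1))"
proof -
  have "M y = M (\<Sum>i\<in>UNIV. y$i *\<^sub>R axis i 1)"
    using basis_expansion[of y] by (simp add: scalar_mult_eq_scaleR)
  also have "\<dots> = (\<Sum>i\<in>UNIV. y$i * M (axis i 1))"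
    using assms by (simp add: linear_sum linear_scale)
  finally show ?thesis .
qed

lemma grad_decomp:
  fixes L :: "real \<Rightarrow> real^'n \<Rightarrow> real^'n \<Rightarrow> real^'n \<Rightarrow> real"
  assumes der: "((\<lambda>(t, x, v, w). L t x v w) has_derivative blinfun_apply L') (at (t, x, v, w) within ({a..b} \<times> UNIV))"
    and t: "t \<in> {a..b}"
  shows "blinfun_apply L' (0, dx, dv, dw) = grad2 L t x v w \<bullet> dx + grad3 L t x v w \<bullet> dv + grad4 L t x v w \<bullet> dw"
proof -
  define Lf where "Lf = (\<lambda>(t, x, v, w). L t x v w)"
  have D: "deriv (\<lambda>h. Lf ((t, x, v, w) + h *\<^sub>R V)) 0 = blinfun_apply L' V" if "fst V = 0" for V
    using dir_deriv_L[OF der[folded Lf_def]] t that by simp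
  have g2: "grad2 L t x v w = (\<chi> i. blinfun_apply L' (0, axis i 1, 0, 0))"
    unfolding grad2_def using D[of "(0, axis _ 1, 0, 0)"] by (simp add: Lf_def)
  have g3: "grad3 L t x v w = (\<chi> i. blinfun_apply L' (0, 0, axis i 1, 0))"
    unfolding grad3_def using D[of "(0, 0, axis _ 1, 0)"] by (simp add: Lf_def)
  have g4: "grad4 L t x v w = (\<chi> i. blinfun_apply L' (0, 0, 0, axis i 1))"
    unfolding grad4_def using D[of "(0, 0, 0, axis _ 1)"] by (simp add: Lf_def)
  have lin2: "linear (\<lambda>y. blinfun_apply L' (0, y, 0, 0))"
  proof (rule linearI)
    fix y z :: "real^'n"
    show "blinfun_apply L' (0, (y + z), 0, 0) = blinfun_apply L' (0, y, 0, 0) + blinfun_apply L' (0, z, 0, 0)"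
      using blinfun.add_right[of L' "(0, y, 0, 0)" "(0, z, 0, 0)"] by simp
  next
    fix r :: real and y :: "real^'n"
    show "blinfun_apply L' (0, r *\<^sub>R y, 0, 0) = r *\<^sub>R blinfun_apply L' (0, y, 0, 0)"
      using blinfun.scaleR_right[of L' r "(0, y, 0, 0)"] by simp
  qed
  have lin3: "linear (\<lambda>y. blinfun_apply L' (0, 0, y, 0))"
  proof (rule linearI)
    fix y z :: "real^'n"
    show "blinfun_apply L' (0, 0, (y + z), 0) = blinfun_apply L' (0, 0, y, 0) + blinfun_apply L' (0, 0, z, 0)"
      using blinfun.add_right[of L' "(0, 0, y, 0)" "(0, 0, z, 0)"] by simp
  next
    fix r :: real and y :: "real^'n"
    show "blinfun_apply L' (0, 0, r *\<^sub>R y, 0) = r *\<^sub>R blinfun_apply L' (0, 0, y, 0)"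
      using blinfun.scaleR_right[of L' r "(0, 0, y, 0)"] by simp
  qed
  have lin4: "linear (\<lambda>y. blinfun_apply L' (0, 0, 0, y))"
  proof (rule linearI)
    fix y z :: "real^'n"
    show "blinfun_apply L' (0, 0, 0, (y + z)) = blinfun_apply L' (0, 0, 0, y) + blinfun_apply L' (0, 0, 0, z)"
      using blinfun.add_right[of L' "(0, 0, 0, y)" "(0, 0, 0, z)"] by simp
  next
    fix r :: real and y :: "real^'n"
    show "blinfun_apply L' (0, 0, 0, r *\<^sub>R y) = r *\<^sub>R blinfun_apply L' (0, 0, 0, y)"
      using blinfun.scaleR_right[of L' r "(0, 0, 0, y)"] by simp
  qed
  have split: "blinfun_apply L' (0, dx, dv, dw) = blinfun_apply L' (0, dx, 0, 0) + blinfun_apply L' (0, 0, dv, 0) + blinfun_apply L' (0, 0, 0, dw)"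
    by (simp add: blinfun.add_right[symmetric])
  show ?thesis
    unfolding split g2 g3 g4 inner_vec_def
    by (subst linear_cart_expand[OF lin2], subst linear_cart_expand[OF lin3], subst linear_cart_expand[OF lin4])
       (simp add: mult.commute)
qed


lemma integral_Icc_refl: "integral {a..a::real} f = 0"
  by (metis box_real(2) integral_refl)

lemma caputo_eq:
  fixes h G :: "real \<Rightarrow> 'a::euclidean_space"
  assumes hd: "\<And>s. s \<in> {a..b} \<Longrightarrow> (h has_vector_derivative G s) (at s within {a..b})"
    and t: "t \<in> {a..b}"
  shows "caputo_left a \<alpha> h t = TT a \<alpha> G t"
proof (cases "t = a")
  case True
  then show ?thesis by (simp add: caputo_left_def TT_def integral_Icc_refl)
next
  case False
  then have at: "a < t" using t by auto
  show ?thesis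
    unfolding caputo_left_def TT_def
  proof (rule integral_cong)
    fix s assume s: "s \<in> {a..t}"
    have "(h has_vector_derivative G s) (at s within cbox a t)"
      using has_vector_derivative_within_subset[OF hd[of s], of "{a..t}"] s t by (simp add: box_real)
    moreover have "s \<in> cbox a t" using s by (simp add: box_real)
    ultimately have "vector_derivative h (at s within cbox a t) = G s"
      using vector_derivative_within_cbox[OF at] by blast
    then show "((t - s) powr - \<alpha> / Gamma (1 - \<alpha>)) *\<^sub>R vector_derivative h (at s within {a..t}) =
          ((t - s) powr - \<alpha> / Gamma (1 - \<alpha>)) *\<^sub>R G s" by (simp add: box_real)
  qed
qed

lemma ddt_eq:
  fixes h :: "real \<Rightarrow> 'a::real_normed_vector"
  assumes ab: "a < b" and t: "t \<in> {a..b}" and hd: "(h has_vector_derivative g) (at t within {a..b})"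
  shows "ddt a b h t = g"
  unfolding ddt_def using vector_derivative_within_cbox[OF ab, of t h g] t hd by (simp add: box_real)

lemma integral_eq_pointwise:
  fixes f g :: "real \<Rightarrow> real"
  assumes ab: "a < b" and cf: "continuous_on {a..b} f" and cg: "continuous_on {a..b} g"
    and eq: "\<And>x. x \<in> {a..b} \<Longrightarrow> integral {a..x} f = integral {a..x} g"
    and t: "t \<in> {a..b}"
  shows "f t = g t"
proof -
  have D1: "((\<lambda>u. integral {a..u} f) has_vector_derivative f t) (at t within {a..b})"
    by (rule integral_has_vector_derivative[OF cf t])
  have D2: "((\<lambda>u. integral {a..u} g) has_vector_derivative g t) (at t within {a..b})"
    by (rule integral_has_vector_derivative[OF cg t])
  have D1': "((\<lambda>u. integral {a..u} g) has_vector_derivative f t) (at t within {a..b})"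
    by (rule has_vector_derivative_transform[OF t _ D1]) (simp add: eq)
  have "at t within {a..b} \<noteq> bot"
    using ab t by (simp add: trivial_limit_within)
  then show ?thesis by (rule vector_derivative_unique_within[OF _ D1' D2])
qed


theorem mainTheorem3:
  fixes a b \<alpha> :: real
    and L :: "real \<Rightarrow> real^'n \<Rightarrow> real^'n \<Rightarrow> real^'n \<Rightarrow> real"
    and \<psi>2 :: "real \<Rightarrow> real^'n \<Rightarrow> real^'n"
    and q :: "real \<Rightarrow> real^'n"
  assumes "a < b" and "0 < \<alpha>" and "\<alpha> < 1"
    and "C2_on ({a..b} \<times> UNIV) (\<lambda>(t, x, v, w). L t x v w)"
    and "one_param_group_diffeo \<psi>2"
    and invariant: "\<forall>p. EL_solution a b \<alpha> L p \<longrightarrow>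
           (\<forall>\<epsilon> ta tb. a \<le> ta \<and> ta \<le> tb \<and> tb \<le> b \<longrightarrow>
              integral {ta..tb} (\<lambda>t. L t (p t) (ddt a b p t) (caputo_left a \<alpha> p t)) =
              integral {ta..tb} (\<lambda>t. L t (\<psi>2 \<epsilon> (p t)) (ddt a b (\<lambda>s. \<psi>2 \<epsilon> (p s)) t)
                                        (caputo_left a \<alpha> (\<lambda>s. \<psi>2 \<epsilon> (p s)) t)))"
    and "EL_solution a b \<alpha> L q"
  shows "\<forall>t\<in>{a..b}.
           (let f2 = (\<lambda>s. vector_derivative (\<lambda>e. \<psi>2 e (q s)) (at 0)) in
              f2 t \<bullet> ddt a b (along grad3 L a b \<alpha> q) t
            + along grad3 L a b \<alpha> q t \<bullet> ddt a b f2 t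
            + along grad4 L a b \<alpha> q t \<bullet> caputo_left a \<alpha> f2 t
            - f2 t \<bullet> rl_right_deriv a b \<alpha> (along grad4 L a b \<alpha> q) t = 0)"
proof (intro ballI)
  fix t assume t: "t \<in> {a..b}"
  note ab = \<open>a < b\<close> and al = \<open>0 < \<alpha>\<close> \<open>\<alpha> < 1\<close>
  have sm: "smooth_map (\<lambda>(e, x). \<psi>2 e x)" and psi0: "\<psi>2 0 = id"
    using \<open>one_param_group_diffeo \<psi>2\<close> unfolding one_param_group_diffeo_def by auto
  have psi0': "(\<lambda>s. \<psi>2 0 (q s)) = q" using psi0 by auto
  obtain q' where qd0: "\<forall>t\<in>{a..b}. (q has_vector_derivative q' t) (at t within {a..b})"
      and cq': "continuous_on {a..b} q'"
    using \<open>EL_solution a b \<alpha> L q\<close> unfolding EL_solution_def by blast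
  have qd: "\<And>s. s \<in> {a..b} \<Longrightarrow> (q has_vector_derivative q' s) (at s within {a..b})"
    using qd0 by blast
  define S where "S = {a..b} \<times> (UNIV :: ((real^'n) \<times> (real^'n) \<times> (real^'n)) set)"
  define Lf where "Lf = (\<lambda>(t, x, v, w). L t x v w)"
  obtain L' where Lder: "\<And>p. p \<in> S \<Longrightarrow> (Lf has_derivative blinfun_apply (L' p)) (at p within S)"
    using \<open>C2_on ({a..b} \<times> UNIV) (\<lambda>(t, x, v, w). L t x v w)\<close>
    unfolding C2_on_def S_def Lf_def by blast
  have cLf: "continuous_on S Lf"
    unfolding continuous_on_eq_continuous_within
    using Lder has_derivative_continuous by blast
  define G where "G = Gf \<psi>2 q q'"
  define H where "H = Hf \<psi>2 q q'"
  define E where "E = (\<lambda>s. Ef \<psi>2 0 (q s))"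
  have f2E: "(\<lambda>s. vector_derivative (\<lambda>e. \<psi>2 e (q s)) (at 0)) = E"
  proof
    fix s
    have "((\<lambda>k. \<psi>2 (0 + k) (q s)) has_vector_derivative Ef \<psi>2 0 (q s)) (at 0)" by (rule L1[OF sm])
    then show "vector_derivative (\<lambda>e. \<psi>2 e (q s)) (at 0) = E s"
      by (simp add: E_def vector_derivative_at)
  qed
  have dpsi: "((\<lambda>\<epsilon>. \<psi>2 \<epsilon> (q t)) has_vector_derivative E t) (at 0)"
    using L1[OF sm, of 0 "q t"] by (simp add: E_def)
  have chG: "((\<lambda>s. \<psi>2 \<epsilon> (q s)) has_vector_derivative G \<epsilon> s) (at s within {a..b})"
    if "s \<in> {a..b}" for \<epsilon> s
    unfolding G_def using chain_psi[OF sm ab _ cq'] qd that by blast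
  have chE: "((\<lambda>s. Ef \<psi>2 0 (q s)) has_vector_derivative H s) (at s within {a..b})"
    if "s \<in> {a..b}" for s
    unfolding H_def using chain_E[OF sm ab _ cq'] qd that by blast
  have cG: "continuous_on {a..b} (G \<epsilon>)" for \<epsilon>
    unfolding G_def using cont_G[OF sm ab _ cq'] qd by blast
  have cH: "continuous_on {a..b} H"
    unfolding H_def using cont_H[OF sm ab _ cq'] qd by blast
  have ddtG: "ddt a b (\<lambda>s. \<psi>2 \<epsilon> (q s)) s = G \<epsilon> s" if "s \<in> {a..b}" for \<epsilon> s
    by (rule ddt_eq[OF ab that chG[OF that]])
  have ddtE: "ddt a b E t = H t"
    unfolding E_def using ddt_eq[OF ab t chE[OF t]] by simp
  have capG: "caputo_left a \<alpha> (\<lambda>s. \<psi>2 \<epsilon> (q s)) s = TT a \<alpha> (G \<epsilon>) s" if "s \<in> {a..b}" for \<epsilon> s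
    by (rule caputo_eq[OF chG that])
  have capE: "caputo_left a \<alpha> E t = TT a \<alpha> H t"
    unfolding E_def using caputo_eq[OF chE t] by simp
  have dTT: "((\<lambda>\<epsilon>. TT a \<alpha> (G \<epsilon>) t) has_vector_derivative TT a \<alpha> H t) (at 0)"
  proof (rule TT_deriv[OF al])
    show "a \<le> t" using t by simp
    show "continuous_on {a..t} (G \<epsilon>)" for \<epsilon> by (rule continuous_on_subset[OF cG]) (use t in auto)
    show "continuous_on {a..t} H" by (rule continuous_on_subset[OF cH]) (use t in auto)
    fix e :: real assume "e > 0"
    have "\<exists>d>0. \<forall>\<epsilon>. \<bar>\<epsilon>\<bar> < d \<longrightarrow> (\<forall>s\<in>{a..b}. norm (G \<epsilon> s - G 0 s - \<epsilon> *\<^sub>R H s) \<le> e * \<bar>\<epsilon>\<bar>)"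
      unfolding G_def H_def using unif_G[OF sm ab _ cq' \<open>e > 0\<close>] qd by blast
    moreover have "{a..t} \<subseteq> {a..b}" using t by auto
    ultimately show "\<exists>d>0. \<forall>\<epsilon>. \<bar>\<epsilon>\<bar> < d \<longrightarrow> (\<forall>s\<in>{a..t}. norm (G \<epsilon> s - G 0 s - \<epsilon> *\<^sub>R H s) \<le> e * \<bar>\<epsilon>\<bar>)"
      by blast
  qed
  have dG: "((\<lambda>\<epsilon>. G \<epsilon> t) has_vector_derivative H t) (at 0)"
    unfolding G_def H_def using derG[OF sm ab _ cq'] qd by blast
  define \<gamma> where "\<gamma> = (\<lambda>\<epsilon>. (t, \<psi>2 \<epsilon> (q t), G \<epsilon> t, TT a \<alpha> (G \<epsilon>) t))"
  define V where "V = (0::real, E t, H t, TT a \<alpha> H t)"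
  have dgam: "(\<gamma> has_vector_derivative V) (at 0)"
    unfolding \<gamma>_def V_def by (intro has_vector_derivative_Pair has_vector_derivative_const dpsi dG dTT)
  have gamS: "\<gamma> \<epsilon> \<in> S" for \<epsilon> using t by (simp add: \<gamma>_def S_def)
  \<comment> \<open>invariance gives pointwise constancy\<close>
  define fe where "fe = (\<lambda>\<epsilon> s. Lf (s, \<psi>2 \<epsilon> (q s), G \<epsilon> s, TT a \<alpha> (G \<epsilon>) s))"
  have cfe: "continuous_on {a..b} (fe \<epsilon>)" for \<epsilon>
  proof -
    have cpsi: "continuous_on {a..b} (\<lambda>s. \<psi>2 \<epsilon> (q s))"
      using chG has_vector_derivative_continuous continuous_on_eq_continuous_within by blast
    have "continuous_on {a..b} (\<lambda>s. (s, \<psi>2 \<epsilon> (q s), G \<epsilon> s, TT a \<alpha> (G \<epsilon>) s))"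
      by (intro continuous_intros cpsi cG TT_continuous[OF al less_imp_le[OF ab] cG])
    then show ?thesis
      unfolding fe_def
      by (rule continuous_on_compose2[OF cLf]) (auto simp: S_def)
  qed
  have fe0: "fe 0 s = L s (q s) (ddt a b q s) (caputo_left a \<alpha> q s)" if "s \<in> {a..b}" for s
    using ddtG[OF that, of 0] capG[OF that, of 0] by (simp add: fe_def Lf_def psi0' psi0)
  have feE: "fe \<epsilon> s = L s (\<psi>2 \<epsilon> (q s)) (ddt a b (\<lambda>s. \<psi>2 \<epsilon> (q s)) s) (caputo_left a \<alpha> (\<lambda>s. \<psi>2 \<epsilon> (q s)) s)"
    if "s \<in> {a..b}" for \<epsilon> s
    using ddtG[OF that, of \<epsilon>] capG[OF that, of \<epsilon>] by (simp add: fe_def Lf_def)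
  have const: "fe \<epsilon> t = fe 0 t" for \<epsilon>
  proof (rule integral_eq_pointwise[OF ab cfe cfe _ t])
    fix x assume x: "x \<in> {a..b}"
    have "integral {a..x} (\<lambda>t. L t (q t) (ddt a b q t) (caputo_left a \<alpha> q t)) =
          integral {a..x} (\<lambda>t. L t (\<psi>2 \<epsilon> (q t)) (ddt a b (\<lambda>s. \<psi>2 \<epsilon> (q s)) t)
                                        (caputo_left a \<alpha> (\<lambda>s. \<psi>2 \<epsilon> (q s)) t))"
      using invariant \<open>EL_solution a b \<alpha> L q\<close> x by auto
    moreover have "integral {a..x} (fe 0) = integral {a..x} (\<lambda>t. L t (q t) (ddt a b q t) (caputo_left a \<alpha> q t))"
      by (rule integral_cong) (use x fe0 in auto)
    moreover have "integral {a..x} (fe \<epsilon>) = integral {a..x} (\<lambda>t. L t (\<psi>2 \<epsilon> (q t)) (ddt a b (\<lambda>s. \<psi>2 \<epsilon> (q s)) t)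
                                        (caputo_left a \<alpha> (\<lambda>s. \<psi>2 \<epsilon> (q s)) t))"
      by (rule integral_cong) (use x feE in auto)
    ultimately show "integral {a..x} (fe \<epsilon>) = integral {a..x} (fe 0)" by simp
  qed
  have Lgam: "Lf (\<gamma> \<epsilon>) = Lf (\<gamma> 0)" for \<epsilon>
    using const[of \<epsilon>] by (simp add: fe_def \<gamma>_def)
  have "((\<lambda>\<epsilon>. Lf (\<gamma> \<epsilon>)) has_derivative (\<lambda>h. blinfun_apply (L' (\<gamma> 0)) (h *\<^sub>R V))) (at 0)"
  proof (rule has_derivative_in_compose[where s=UNIV and f=\<gamma> and f'="\<lambda>h. h *\<^sub>R V" and g=Lf and g'="blinfun_apply (L' (\<gamma> 0))"])
    show "(\<gamma> has_derivative (\<lambda>h. h *\<^sub>R V)) (at 0)"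
      using dgam by (simp add: has_vector_derivative_def)
    show "(Lf has_derivative blinfun_apply (L' (\<gamma> 0))) (at (\<gamma> 0) within range \<gamma>)"
      by (rule has_derivative_subset[OF Lder[OF gamS]]) (auto simp: gamS)
  qed
  moreover have "((\<lambda>\<epsilon>. Lf (\<gamma> \<epsilon>)) has_derivative (\<lambda>h. 0)) (at 0)"
  proof -
    have e: "(\<lambda>\<epsilon>. Lf (\<gamma> \<epsilon>)) = (\<lambda>\<epsilon>. Lf (\<gamma> 0))" by (rule ext) (rule Lgam)
    show ?thesis unfolding e by (rule has_derivative_const)
  qed
  ultimately have feq: "(\<lambda>h. blinfun_apply (L' (\<gamma> 0)) (h *\<^sub>R V)) = (\<lambda>h. 0)"
    by (rule has_derivative_unique)
  have LV: "blinfun_apply (L' (\<gamma> 0)) V = 0"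
    using fun_cong[OF feq, of 1] by simp
  have gam0: "\<gamma> 0 = (t, q t, ddt a b q t, caputo_left a \<alpha> q t)"
    using ddtG[OF t, of 0] capG[OF t, of 0] by (simp add: \<gamma>_def psi0' psi0)
  have Lder0: "((\<lambda>(t, x, v, w). L t x v w) has_derivative blinfun_apply (L' (\<gamma> 0)))
      (at (t, q t, ddt a b q t, caputo_left a \<alpha> q t) within ({a..b} \<times> UNIV))"
    using Lder[OF gamS[of 0]] unfolding gam0 S_def Lf_def .
  have dec: "blinfun_apply (L' (\<gamma> 0)) V =
      along grad2 L a b \<alpha> q t \<bullet> E t + along grad3 L a b \<alpha> q t \<bullet> H t + along grad4 L a b \<alpha> q t \<bullet> TT a \<alpha> H t"
    unfolding V_def along_def by (rule grad_decomp[OF Lder0 t])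
  have ELall: "\<forall>t\<in>{a..b}. along grad3 L a b \<alpha> q differentiable (at t within {a..b}) \<and>
        rl_int_right b (1 - \<alpha>) (along grad4 L a b \<alpha> q) differentiable (at t within {a..b}) \<and>
        along grad2 L a b \<alpha> q t - ddt a b (along grad3 L a b \<alpha> q) t
          + rl_right_deriv a b \<alpha> (along grad4 L a b \<alpha> q) t = 0"
    using \<open>EL_solution a b \<alpha> L q\<close> unfolding EL_solution_def by (rule conjunct2)
  have EL: "along grad2 L a b \<alpha> q t - ddt a b (along grad3 L a b \<alpha> q) t
          + rl_right_deriv a b \<alpha> (along grad4 L a b \<alpha> q) t = 0"
    using bspec[OF ELall t] by (elim conjE)
  have X: "E t \<bullet> ddt a b (along grad3 L a b \<alpha> q) t - E t \<bullet> rl_right_deriv a b \<alpha> (along grad4 L a b \<alpha> q) t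
      = along grad2 L a b \<alpha> q t \<bullet> E t"
  proof -
    have "along grad2 L a b \<alpha> q t = ddt a b (along grad3 L a b \<alpha> q) t - rl_right_deriv a b \<alpha> (along grad4 L a b \<alpha> q) t"
      using EL by (simp add: eq_diff_eq add_diff_eq diff_add_eq eq_neg_iff_add_eq_0)
    then show ?thesis by (simp add: inner_diff_right inner_commute)
  qed
  have Y: "along grad3 L a b \<alpha> q t \<bullet> H t + along grad4 L a b \<alpha> q t \<bullet> TT a \<alpha> H t
      = - (along grad2 L a b \<alpha> q t \<bullet> E t)"
    using LV dec by linarith
  show "let f2 = (\<lambda>s. vector_derivative (\<lambda>e. \<psi>2 e (q s)) (at 0)) in
              f2 t \<bullet> ddt a b (along grad3 L a b \<alpha> q) t
            + along grad3 L a b \<alpha> q t \<bullet> ddt a b f2 t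
            + along grad4 L a b \<alpha> q t \<bullet> caputo_left a \<alpha> f2 t
            - f2 t \<bullet> rl_right_deriv a b \<alpha> (along grad4 L a b \<alpha> q) t = 0"
    unfolding Let_def f2E ddtE capE
    using X Y by linarith
qed


end
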